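(* Let $X,Y,Z\in\mathbb{Z}[i]$ satisfy $X^2+Y^2=Z^2$, $\gcd(X,Y)\in U$, $XYZ\neq 0$, with $X,Z\in O^I$ and $Y\in (1+i)^2G$ (i.e. $Y=(1+i)^{2}W$ with $W\in G$). Then there exist an integer $t$ with $0\le t\le 3$ and $P,Q\in G$ with $\gcd(P,Q)=1$ and $PQ\equiv 0 \pmod{1+i}$ such that $$X=i^{t+1}\big(P^2-(-1)^tQ^2\big),\quad Y=(1+i)^2PQ,\quad Z=i^{t+1}\big(P^2+(-1)^tQ^2\big).$$
   Context: $\mathbb{Z}[i]$ is the ring of Gaussian integers, $U=\{1,-1,i,-i\}$ its unit group; $R(\alpha),I(\alpha)$ are real and imaginary parts. $\gcd(x,y)\in U$ means $x,y$ have no common non-unit divisor; for $P,Q\in G$, $\gcd(P,Q)=1$ means $P,Q$ have no common prime factor. $O=\{\alpha: R(\alpha)+I(\alpha)\equiv1\pmod 2\}$, $O^I=\{\alpha\in O: R(\alpha)\equiv 1\pmod 4\}$. $G$ is the set of Gaussian integers of the form $(1+i)^{a_1}p_2^{a_2}\cdots p_m^{a_m}$ with integers $a_j\ge 0$ and $p_2,\dots,p_m$ distinct Gaussian primes lying in $O^I$ (the empty product $1$ included). *)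

theory Defs
  imports Complex_Main
begin

definition gauss_int :: "complex set" where
  "gauss_int = {z. Re z \<in> \<int> \<and> Im z \<in> \<int>}"

definition gdvd :: "complex \<Rightarrow> complex \<Rightarrow> bool" (infix "gdvd" 50) where
  "a gdvd b \<longleftrightarrow> (\<exists>c\<in>gauss_int. b = a * c)"

definition gunits :: "complex set" where
  "gunits = {1, -1, \<i>, -\<i>}"

definition gauss_prime :: "complex \<Rightarrow> bool" where
  "gauss_prime p \<longleftrightarrow> p \<in> gauss_int \<and> p \<noteq> 0 \<and> p \<notin> gunits \<and>
     (\<forall>a\<in>gauss_int. \<forall>b\<in>gauss_int. p gdvd (a * b) \<longrightarrow> p gdvd a \<or> p gdvd b)"

definition gcd_unit :: "complex \<Rightarrow> complex \<Rightarrow> bool" where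
  "gcd_unit x y \<longleftrightarrow> (\<forall>d\<in>gauss_int. d gdvd x \<and> d gdvd y \<longrightarrow> d \<in> gunits)"

definition gO :: "complex set" where
  "gO = {z \<in> gauss_int. (\<lfloor>Re z\<rfloor> + \<lfloor>Im z\<rfloor>) mod 2 = 1}"

definition gOI :: "complex set" where
  "gOI = {z \<in> gO. \<lfloor>Re z\<rfloor> mod 4 = 1}"

definition gG :: "complex set" where
  "gG = {z. \<exists>(a::nat) (S::complex set) (e::complex \<Rightarrow> nat).
            finite S \<and> (\<forall>p\<in>S. gauss_prime p \<and> p \<in> gOI) \<and>
            z = (1 + \<i>) ^ a * (\<Prod>p\<in>S. p ^ e p)}"

definition coprime_G :: "complex \<Rightarrow> complex \<Rightarrow> bool" where
  "coprime_G P Q \<longleftrightarrow> \<not> (\<exists>p. gauss_prime p \<and> p gdvd P \<and> p gdvd Q)"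

end

theory Submission
  imports Defs
begin

lemma gauss_int_iff: "z \<in> gauss_int \<longleftrightarrow> (\<exists>a b::int. z = Complex (of_int a) (of_int b))"
proof
  assume "z \<in> gauss_int"
  then have "Re z \<in> \<int>" "Im z \<in> \<int>" unfolding gauss_int_def by auto
  then obtain a b where "Re z = of_int a" "Im z = of_int b" by (auto elim!: Ints_cases)
  then have "z = Complex (of_int a) (of_int b)" by (simp add: complex_eq_iff)
  then show "\<exists>a b::int. z = Complex (of_int a) (of_int b)" by blast
next
  assume "\<exists>a b::int. z = Complex (of_int a) (of_int b)"
  then show "z \<in> gauss_int" unfolding gauss_int_def by auto
qed
lemma gi_add: "a \<in> gauss_int \<Longrightarrow> b \<in> gauss_int \<Longrightarrow> a + b \<in> gauss_int"
  unfolding gauss_int_def by (simp add: Ints_add)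
lemma gi_diff: "a \<in> gauss_int \<Longrightarrow> b \<in> gauss_int \<Longrightarrow> a - b \<in> gauss_int"
  unfolding gauss_int_def by (simp add: Ints_diff)
lemma gi_minus: "a \<in> gauss_int \<Longrightarrow> - a \<in> gauss_int"
  unfolding gauss_int_def by (simp add: Ints_minus)
lemma gi_mult: "a \<in> gauss_int \<Longrightarrow> b \<in> gauss_int \<Longrightarrow> a * b \<in> gauss_int"
  unfolding gauss_int_def by (simp add: Ints_diff Ints_add Ints_mult)
lemma gi_1[simp]: "1 \<in> gauss_int" and gi_0[simp]: "0 \<in> gauss_int"
  and gi_i[simp]: "\<i> \<in> gauss_int" and gi_1i[simp]: "1 + \<i> \<in> gauss_int"
  unfolding gauss_int_def by simp_all
lemma gi_power: "a \<in> gauss_int \<Longrightarrow> a ^ n \<in> gauss_int"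
  by (induction n) (simp_all add: gi_mult)
lemma gi_prod: "(\<And>x. x \<in> A \<Longrightarrow> f x \<in> gauss_int) \<Longrightarrow> prod f A \<in> gauss_int"
  by (induction A rule: infinite_finite_induct) (simp_all add: gi_mult)
lemma gunits_gi: "u \<in> gunits \<Longrightarrow> u \<in> gauss_int"
  unfolding gunits_def using gi_minus by auto
lemma gdvd_refl: "a gdvd a"
  unfolding gdvd_def by (intro bexI[of _ 1]) auto
lemma gdvdE: assumes "a gdvd b" obtains c where "c \<in> gauss_int" "b = a * c"
  using assms unfolding gdvd_def by blast
lemma gdvdI: "c \<in> gauss_int \<Longrightarrow> b = a * c \<Longrightarrow> a gdvd b"
  unfolding gdvd_def by blast
lemma gdvd_trans: assumes "a gdvd b" "b gdvd c" shows "a gdvd c"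
proof -
  obtain c1 where "c1 \<in> gauss_int" "b = a * c1" using assms(1) by (rule gdvdE)
  moreover obtain c2 where "c2 \<in> gauss_int" "c = b * c2" using assms(2) by (rule gdvdE)
  ultimately show ?thesis by (intro gdvdI[of "c1*c2"]) (auto simp: mult.assoc gi_mult)
qed
lemma gdvd_multR: assumes "a gdvd b" "c \<in> gauss_int" shows "a gdvd b * c"
proof -
  obtain c1 where "c1 \<in> gauss_int" "b = a * c1" using assms(1) by (rule gdvdE)
  then show ?thesis using assms(2) by (intro gdvdI[of "c1*c"]) (auto simp: mult.assoc gi_mult)
qed
lemma gdvd_multL: "a gdvd b \<Longrightarrow> c \<in> gauss_int \<Longrightarrow> a gdvd c * b"
  using gdvd_multR[of a b c] by (simp add: mult.commute)
lemma gdvd_add: assumes "a gdvd b" "a gdvd c" shows "a gdvd b + c"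
proof -
  obtain c1 where "c1 \<in> gauss_int" "b = a * c1" using assms(1) by (rule gdvdE)
  moreover obtain c2 where "c2 \<in> gauss_int" "c = a * c2" using assms(2) by (rule gdvdE)
  ultimately show ?thesis by (intro gdvdI[of "c1+c2"]) (auto simp: distrib_left gi_add)
qed
lemma gdvd_diff: assumes "a gdvd b" "a gdvd c" shows "a gdvd b - c"
proof -
  obtain c1 where "c1 \<in> gauss_int" "b = a * c1" using assms(1) by (rule gdvdE)
  moreover obtain c2 where "c2 \<in> gauss_int" "c = a * c2" using assms(2) by (rule gdvdE)
  ultimately show ?thesis by (intro gdvdI[of "c1-c2"]) (auto simp: right_diff_distrib gi_diff)
qed
lemma gdvd_minus: assumes "a gdvd b" shows "a gdvd - b"
proof -
  obtain c1 where "c1 \<in> gauss_int" "b = a * c1" using assms(1) by (rule gdvdE)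
  then show ?thesis by (intro gdvdI[of "-c1"]) (auto simp: gi_minus)
qed
lemma gdvd_self_mult: "b \<in> gauss_int \<Longrightarrow> a gdvd a * b"
  by (rule gdvdI) auto
lemma gdvd_power: assumes "a gdvd b" shows "a ^ n gdvd b ^ n"
proof -
  obtain c1 where "c1 \<in> gauss_int" "b = a * c1" using assms(1) by (rule gdvdE)
  then show ?thesis by (intro gdvdI[of "c1^n"]) (auto simp: power_mult_distrib gi_power)
qed
lemma gdvd_cancel: assumes "a \<noteq> 0" "a * b gdvd a * c" shows "b gdvd c"
proof -
  obtain c1 where "c1 \<in> gauss_int" "a * c = a * b * c1" using assms(2) by (rule gdvdE)
  then show ?thesis using assms(1) by (intro gdvdI[of c1]) (auto simp: mult.assoc gi_mult)
qed

lemma int_sq1: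
  fixes a b :: int assumes h: "a*a + b*b = 1"
  shows "(a=1\<and>b=0)\<or>(a=-1\<and>b=0)\<or>(a=0\<and>b=1)\<or>(a=0\<and>b=-1)"
proof -
  have "0 \<le> a*a" "0 \<le> b*b" by simp_all
  then have "a*a \<le> 1" "b*b \<le> 1" using h by linarith+
  then have "\<bar>a\<bar> \<le> 1" "\<bar>b\<bar> \<le> 1" using abs_square_le_1[of a] abs_square_le_1[of b] by (simp_all add: power2_eq_square)
  then have a1: "-1 \<le> a" "a \<le> 1" and b1: "-1 \<le> b" "b \<le> 1" by (simp_all add: abs_le_iff)
  show ?thesis
  proof (cases "a = 0")
    case True
    then have "b*b = 1" using h by simp
    then have "b \<noteq> 0" by auto
    then have "b = 1 \<or> b = -1" using b1 by linarith
    then show ?thesis using True by auto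
  next
    case False
    then have "a = 1 \<or> a = -1" using a1 by linarith
    then have "a*a = 1" by auto
    then have "b = 0" using h by simp
    then show ?thesis using \<open>a = 1 \<or> a = -1\<close> by auto
  qed
qed

lemma unit_lemma:
  assumes "p \<in> gauss_int" "d \<in> gauss_int" "p * d = 1" shows "p \<in> gunits"
proof -
  obtain a b c e :: int where p: "p = Complex a b" and d: "d = Complex c e"
    using assms gauss_int_iff by metis
  have h0: "real_of_int (a*c - b*e) = 1" "real_of_int (a*e + b*c) = 0" using assms(3) unfolding p d
    by (auto simp: complex_eq_iff)
  have h: "a*c - b*e = 1" "a*e + b*c = 0" using h0 by (simp_all only: of_int_eq_1_iff of_int_eq_0_iff)
  have "(a*a+b*b)*(c*c+e*e) = (a*c - b*e)^2 + (a*e+b*c)^2" by (simp add: algebra_simps power2_eq_square)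
  also have "\<dots> = 1" using h by simp
  finally have "(a*a+b*b)*(c*c+e*e) = 1" .
  moreover have "0 \<le> a*a+b*b" by simp
  ultimately have "a*a+b*b = 1" unfolding zmult_eq_1_iff by linarith
  then consider "a=1" "b=0" | "a=-1" "b=0" | "a=0" "b=1" | "a=0" "b=-1"
    using int_sq1 by blast
  then show ?thesis
  proof cases
    case 1 then have "p = 1" by (simp add: p complex_eq_iff) then show ?thesis unfolding gunits_def by blast
  next
    case 2 then have "p = -1" by (simp add: p complex_eq_iff) then show ?thesis unfolding gunits_def by blast
  next
    case 3 then have "p = \<i>" by (simp add: p complex_eq_iff) then show ?thesis unfolding gunits_def by blast
  next
    case 4 then have "p = -\<i>" by (simp add: p complex_eq_iff) then show ?thesis unfolding gunits_def by blast
  qed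
qed



lemma gdvd_1_unit: "p gdvd 1 \<Longrightarrow> p \<in> gauss_int \<Longrightarrow> p \<in> gunits"
  by (erule gdvdE) (metis unit_lemma)

lemma prime_not_dvd_1: "gauss_prime p \<Longrightarrow> \<not> p gdvd 1"
  unfolding gauss_prime_def using gdvd_1_unit by blast

lemma gunits_inv: "u \<in> gunits \<Longrightarrow> \<exists>v\<in>gunits. u * v = 1"
  unfolding gunits_def by (auto intro: bexI[of _ 1] bexI[of _ "-1"] bexI[of _ "\<i>"] bexI[of _ "-\<i>"])

lemma prime_assoc:
  assumes p: "gauss_prime p" and q: "gauss_prime q" and d: "p gdvd q"
  shows "\<exists>u\<in>gunits. q = p * u"
proof -
  obtain c where c: "c \<in> gauss_int" "q = p * c" using d by (rule gdvdE)
  have pg: "p \<in> gauss_int" "p \<noteq> 0" "p \<notin> gunits" and qg: "q \<in> gauss_int" "q \<noteq> 0"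
    using p q unfolding gauss_prime_def by auto
  have "q gdvd p * c" using c(2) gdvd_refl by simp
  then have "q gdvd p \<or> q gdvd c" using q pg c unfolding gauss_prime_def by blast
  then show ?thesis
  proof
    assume "q gdvd c"
    then obtain d where d: "d \<in> gauss_int" "c = q * d" by (rule gdvdE)
    have e: "q = p * (q * d)" using c(2) unfolding d(2) .
    then have "q * (p * d) = q * 1" by (metis mult.left_commute mult_1_right)
    then have "p * d = 1" by (rule mult_left_cancel[OF qg(2), THEN iffD1])
    then have "p \<in> gunits" using unit_lemma pg d by blast
    then show ?thesis using pg by blast
  next
    assume "q gdvd p"
    then obtain d where d: "d \<in> gauss_int" "p = q * d" by (rule gdvdE)
    have e: "q = (q * d) * c" using c(2) unfolding d(2) .
    then have "q * (c * d) = q * 1" by (metis mult.assoc mult.commute mult_1_right)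
    then have "c * d = 1" by (rule mult_left_cancel[OF qg(2), THEN iffD1])
    then have "c \<in> gunits" using unit_lemma c d by blast
    then show ?thesis using c by blast
  qed
qed

lemma gOI_iff: "Complex (of_int a) (of_int b) \<in> gOI \<longleftrightarrow> (a+b) mod 2 = 1 \<and> a mod 4 = 1"
  unfolding gOI_def gO_def gauss_int_def by simp

lemma gOI_form: assumes "z \<in> gOI" obtains a b :: int where "z = Complex (of_int a) (of_int b)"
  "a mod 4 = 1" "even b"
proof -
  have "z \<in> gauss_int" using assms unfolding gOI_def gO_def by auto
  then obtain a b :: int where z: "z = Complex (of_int a) (of_int b)" using gauss_int_iff by blast
  then have "(a+b) mod 2 = 1 \<and> a mod 4 = 1" using assms gOI_iff by simp
  then have "a mod 4 = 1" "even b" by presburger+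
  then show ?thesis using z that by blast
qed

lemma dvd1i_iff: "(1 + \<i>) gdvd Complex (of_int a) (of_int b) \<longleftrightarrow> even (a + b)"
proof
  assume "(1 + \<i>) gdvd Complex (of_int a) (of_int b)"
  then obtain c where c: "c \<in> gauss_int" "Complex (of_int a) (of_int b) = (1 + \<i>) * c" by (rule gdvdE)
  then obtain e f :: int where cf: "c = Complex (of_int e) (of_int f)" using gauss_int_iff by blast
  have "real_of_int a = real_of_int (e - f)" "real_of_int b = real_of_int (e + f)"
    using c(2) unfolding cf by (simp_all add: complex_eq_iff)
  then have "a = e - f" "b = e + f" by (simp_all only: of_int_eq_iff)
  then show "even (a + b)" by simp
next
  assume "even (a + b)"
  then obtain k where k: "a + b = 2 * k" by blast
  have "Complex (of_int a) (of_int b) = (1 + \<i>) * Complex (of_int k) (of_int (k - a))"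
    using k by (simp add: complex_eq_iff) linarith?
  then show "(1 + \<i>) gdvd Complex (of_int a) (of_int b)"
    by (intro gdvdI[of "Complex (of_int k) (of_int (k - a))"]) (auto simp: gauss_int_def)
qed

lemma par_mult: "even ((a*c - b*d) + (a*d + b*c)) \<longleftrightarrow> even (a+b) \<or> even (c+(d::int))"
proof -
  have e: "(a*c - b*d) + (a*d + b*c) = (a+b)*(c+d) - 2*(b*d)" by (simp add: algebra_simps)
  have m: "even (m - 2*k) \<longleftrightarrow> even m" for m k :: int by presburger
  have "even ((a*c - b*d) + (a*d + b*c)) \<longleftrightarrow> even ((a+b)*(c+d))" by (simp only: e m)
  then show ?thesis by (simp only: even_mult_iff)
qed

lemma prime_1i: "gauss_prime (1 + \<i>)"
  unfolding gauss_prime_def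
proof (intro conjI ballI impI)
  show "1 + \<i> \<notin> gunits" unfolding gunits_def by (auto simp: complex_eq_iff)
  show "1 + \<i> \<noteq> 0" by (simp add: complex_eq_iff)
  fix x y assume x: "x \<in> gauss_int" and y: "y \<in> gauss_int" and d: "(1 + \<i>) gdvd x * y"
  obtain a b :: int where xa: "x = Complex (of_int a) (of_int b)" using x gauss_int_iff by blast
  obtain c e :: int where yc: "y = Complex (of_int c) (of_int e)" using y gauss_int_iff by blast
  have xy: "x * y = Complex (of_int (a*c - b*e)) (of_int (a*e + b*c))" unfolding xa yc
    by (simp add: complex_eq_iff)
  have "(1 + \<i>) gdvd Complex (of_int (a*c - b*e)) (of_int (a*e + b*c))" using d unfolding xy .
  then have "even ((a*c - b*e) + (a*e + b*c))" by (simp only: dvd1i_iff)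
  then have "even (a+b) \<or> even (c+e)" using par_mult by blast
  then show "(1 + \<i>) gdvd x \<or> (1 + \<i>) gdvd y" unfolding xa yc dvd1i_iff .
qed simp

lemma OI_not_dvd1i: "z \<in> gOI \<Longrightarrow> \<not> (1 + \<i>) gdvd z"
  by (erule gOI_form) (simp only: dvd1i_iff; presburger)

lemma OI_unit: assumes "p \<in> gOI" "u \<in> gunits" "p * u \<in> gOI" shows "u = 1"
proof -
  obtain a b :: int where p: "p = Complex (of_int a) (of_int b)" "a mod 4 = 1" "even b"
    using assms(1) by (rule gOI_form)
  consider "u = 1" | "u = -1" | "u = \<i>" | "u = -\<i>" using assms(2) unfolding gunits_def by blast
  then show ?thesis
  proof cases
    case 2
    then have "p * u = Complex (of_int (-a)) (of_int (-b))" using p by (simp add: complex_eq_iff)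
    then have "(-a) mod 4 = 1" using assms(3) gOI_iff by metis
    then show ?thesis using p by presburger
  next
    case 3
    then have "p * u = Complex (of_int (-b)) (of_int a)" using p by (simp add: complex_eq_iff)
    then have "(-b) mod 4 = 1" using assms(3) gOI_iff by metis
    then show ?thesis using p by presburger
  next
    case 4
    then have "p * u = Complex (of_int b) (of_int (-a))" using p by (simp add: complex_eq_iff)
    then have "b mod 4 = 1" using assms(3) gOI_iff by metis
    then show ?thesis using p by presburger
  qed
qed



lemma prime_gi: "gauss_prime p \<Longrightarrow> p \<in> gauss_int" unfolding gauss_prime_def by blast

lemma prime_dvd_mult: "gauss_prime p \<Longrightarrow> a \<in> gauss_int \<Longrightarrow> b \<in> gauss_int \<Longrightarrow> p gdvd a * b
   \<Longrightarrow> p gdvd a \<or> p gdvd b"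
  unfolding gauss_prime_def by blast

lemma prime_dvd_power: assumes "gauss_prime p" "q \<in> gauss_int" "p gdvd q ^ k" shows "p gdvd q"
  using assms(3)
proof (induction k)
  case 0 then show ?case using prime_not_dvd_1 assms(1) by simp
next
  case (Suc k)
  then have "p gdvd q * q ^ k" by simp
  then have "p gdvd q \<or> p gdvd q ^ k" using prime_dvd_mult assms gi_power by blast
  then show ?case using Suc.IH by blast
qed

lemma prime_dvd_prod:
  assumes "gauss_prime p" "finite T" "\<forall>q\<in>T. q \<in> gauss_int" "p gdvd (\<Prod>q\<in>T. q ^ k q)"
  shows "\<exists>q\<in>T. p gdvd q"
  using assms(2-4)
proof (induction T rule: finite_induct)
  case empty then show ?case using prime_not_dvd_1 assms(1) by simp
next
  case (insert x F)
  then have "p gdvd x ^ k x * (\<Prod>q\<in>F. q ^ k q)" by simp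
  moreover have "x ^ k x \<in> gauss_int" using insert.prems(1) by (simp add: gi_power)
  moreover have "(\<Prod>q\<in>F. q ^ k q) \<in> gauss_int" using insert.prems(1) by (intro gi_prod gi_power) simp
  ultimately have "p gdvd x ^ k x \<or> p gdvd (\<Prod>q\<in>F. q ^ k q)" using prime_dvd_mult assms(1) by blast
  then show ?case
  proof
    assume "p gdvd x ^ k x" then have "p gdvd x" using prime_dvd_power assms(1) insert.prems(1) by blast
    then show ?thesis by blast
  next
    assume "p gdvd (\<Prod>q\<in>F. q ^ k q)" then show ?thesis using insert.IH insert.prems(1) by blast
  qed
qed

lemma lemmaA:
  assumes p: "gauss_prime p" and x: "x \<in> gauss_int" and y: "y \<in> gauss_int"
    and ny: "\<not> p gdvd y"
  shows "p ^ k gdvd x * y \<Longrightarrow> p ^ k gdvd x"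
proof (induction k)
  case 0 show ?case by (rule gdvdI[of x]) (simp_all add: x)
next
  case (Suc k)
  have pg: "p \<in> gauss_int" "p \<noteq> 0" using p unfolding gauss_prime_def by blast+
  have ps: "p ^ Suc k = p ^ k * p" by (rule power_Suc2)
  have "p ^ k gdvd p ^ Suc k" unfolding ps by (rule gdvd_self_mult[OF pg(1)])
  then have "p ^ k gdvd x * y" using Suc.prems by (rule gdvd_trans)
  then have "p ^ k gdvd x" by (rule Suc.IH)
  then obtain m where m: "m \<in> gauss_int" "x = p ^ k * m" by (rule gdvdE)
  have xy: "x * y = p ^ k * (m * y)" unfolding m(2) by (rule mult.assoc)
  have "p ^ k * p gdvd p ^ k * (m * y)" using Suc.prems unfolding ps xy .
  moreover have "p ^ k \<noteq> 0" using pg(2) by simp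
  ultimately have "p gdvd m * y" using gdvd_cancel by blast
  then have "p gdvd m" using prime_dvd_mult[OF p m(1) y] ny by blast
  then obtain d where d: "d \<in> gauss_int" "m = p * d" by (rule gdvdE)
  have "x = p ^ Suc k * d" unfolding m(2) d(2) ps by (rule mult.assoc[symmetric])
  then show ?case by (rule gdvdI[OF d(1)])
qed

lemma lemmaB:
  assumes "finite T" "\<forall>p\<in>T. gauss_prime p" "\<forall>p\<in>T. \<forall>q\<in>T. p gdvd q \<longrightarrow> p = q"
    "x \<in> gauss_int" "\<forall>p\<in>T. p ^ k p gdvd x"
  shows "(\<Prod>p\<in>T. p ^ k p) gdvd x"
  using assms
proof (induction T rule: finite_induct)
  case empty then show ?case by (intro gdvdI[of x]) simp_all
next
  case (insert p F)
  have "(\<Prod>q\<in>F. q ^ k q) gdvd x"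
    by (rule insert.IH) (use insert.prems in blast)+
  then obtain m where m: "m \<in> gauss_int" "x = (\<Prod>q\<in>F. q ^ k q) * m" by (rule gdvdE)
  have pp: "gauss_prime p" using insert.prems(1) by blast
  have Fg: "\<forall>q\<in>F. q \<in> gauss_int" using insert.prems(1) prime_gi by blast
  have Pg: "(\<Prod>q\<in>F. q ^ k q) \<in> gauss_int" using Fg by (intro gi_prod gi_power) blast
  have nd: "\<not> p gdvd (\<Prod>q\<in>F. q ^ k q)"
  proof
    assume "p gdvd (\<Prod>q\<in>F. q ^ k q)"
    then obtain q where "q \<in> F" "p gdvd q" using prime_dvd_prod[OF pp insert(1) Fg] by blast
    then have "p = q" using insert.prems(2) by blast
    then show False using \<open>q \<in> F\<close> insert(2) by blast
  qed
  have "p ^ k p gdvd x" using insert.prems(4) by blast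
  moreover have "x = m * (\<Prod>q\<in>F. q ^ k q)" using m(2) by (simp only: mult.commute)
  ultimately have "p ^ k p gdvd m * (\<Prod>q\<in>F. q ^ k q)" by simp
  then have "p ^ k p gdvd m" by (rule lemmaA[OF pp m(1) Pg nd])
  then obtain d where d: "d \<in> gauss_int" "m = p ^ k p * d" by (rule gdvdE)
  have pe: "(\<Prod>q\<in>insert p F. q ^ k q) = p ^ k p * (\<Prod>q\<in>F. q ^ k q)" using insert(1,2) by simp
  show ?case
  proof (rule gdvdI[of d])
    show "d \<in> gauss_int" by (rule d(1))
    show "x = (\<Prod>q\<in>insert p F. q ^ k q) * d" unfolding pe m(2) d(2) by (simp only: ac_simps)
  qed
qed



lemma prod_in_gG:
  assumes S: "finite S" "\<forall>p\<in>S. gauss_prime p \<and> p \<in> gOI" and B: "B \<subseteq> insert (1 + \<i>) S"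
  shows "(\<Prod>q\<in>B. q ^ e q) \<in> gG"
proof -
  have fB: "finite B" using B S(1) finite_subset by blast
  show ?thesis
  proof (cases "1 + \<i> \<in> B")
    case True
    have eq: "(\<Prod>q\<in>B. q ^ e q) = (1 + \<i>) ^ e (1 + \<i>) * (\<Prod>q\<in>B - {1 + \<i>}. q ^ e q)"
      using prod.remove[OF fB True] .
    have sub: "B - {1 + \<i>} \<subseteq> S" using B by blast
    have f2: "finite (B - {1 + \<i>})" using fB by blast
    have pr: "\<forall>p\<in>B - {1 + \<i>}. gauss_prime p \<and> p \<in> gOI" using sub S(2) by blast
    show ?thesis unfolding gG_def
      by (rule CollectI, rule exI[of _ "e (1 + \<i>)"], rule exI[of _ "B - {1 + \<i>}"], rule exI[of _ e])
        (use eq f2 pr in blast)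
  next
    case False
    have eq: "(\<Prod>q\<in>B. q ^ e q) = (1 + \<i>) ^ 0 * (\<Prod>q\<in>B. q ^ e q)" by simp
    have sub: "B \<subseteq> S" using B False by blast
    have pr: "\<forall>p\<in>B. gauss_prime p \<and> p \<in> gOI" using sub S(2) by blast
    show ?thesis unfolding gG_def
      by (rule CollectI, rule exI[of _ 0], rule exI[of _ B], rule exI[of _ e])
        (use eq fB pr in blast)
  qed
qed

lemma distinct_T:
  assumes S: "\<forall>p\<in>S. gauss_prime p \<and> p \<in> gOI"
    and pq: "p \<in> insert (1 + \<i>) S" "q \<in> insert (1 + \<i>) S" and d: "p gdvd q"
  shows "p = q"
proof (cases "p = q")
  case True then show ?thesis .
next
  case False
  have pp: "gauss_prime p" "gauss_prime q" using pq S prime_1i by blast+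
  obtain u where u: "u \<in> gunits" "q = p * u" using prime_assoc[OF pp d] by blast
  show ?thesis
  proof (cases "p = 1 + \<i>")
    case True
    then have "q \<in> S" using False pq by blast
    then have "q \<in> gOI" using S by blast
    then show ?thesis using OI_not_dvd1i d True by blast
  next
    case pn: False
    then have pS: "p \<in> gOI" using pq S by blast
    show ?thesis
    proof (cases "q = 1 + \<i>")
      case True
      obtain v where v: "v \<in> gunits" "u * v = 1" using gunits_inv u(1) by blast
      have "p = (1 + \<i>) * v" using u(2) v(2) True by (metis mult.assoc mult_1_right)
      then have "(1 + \<i>) gdvd p" using gunits_gi[OF v(1)] by (intro gdvdI[of v])
      then show ?thesis using OI_not_dvd1i pS by blast
    next
      case False
      then have "q \<in> gOI" using pq S by blast
      then have "u = 1" using OI_unit[OF pS u(1)] u(2) by blast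
      then show ?thesis using u(2) by simp
    qed
  qed
qed



theorem theorem4p4:
  fixes X Y Z :: complex
  assumes "X \<in> gauss_int" and "Y \<in> gauss_int" and "Z \<in> gauss_int"
    and "X\<^sup>2 + Y\<^sup>2 = Z\<^sup>2"
    and "gcd_unit X Y"
    and "X * Y * Z \<noteq> 0"
    and "X \<in> gOI" and "Z \<in> gOI"
    and "\<exists>W\<in>gG. Y = (1 + \<i>)\<^sup>2 * W"
  shows "\<exists>(t::nat) P Q. t \<le> 3 \<and> P \<in> gG \<and> Q \<in> gG \<and> coprime_G P Q \<and>
           (1 + \<i>) gdvd (P * Q) \<and>
           X = \<i> ^ (t + 1) * (P\<^sup>2 - (-1) ^ t * Q\<^sup>2) \<and>
           Y = (1 + \<i>)\<^sup>2 * P * Q \<and>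
           Z = \<i> ^ (t + 1) * (P\<^sup>2 + (-1) ^ t * Q\<^sup>2)"
proof -
  note XG = assms(1) and YG = assms(2) and ZG = assms(3)
  obtain W where W: "W \<in> gG" "Y = (1 + \<i>)\<^sup>2 * W" using assms(9) by blast
  obtain a S e where S: "finite S" "\<forall>p\<in>S. gauss_prime p \<and> p \<in> gOI"
    and Wd: "W = (1 + \<i>) ^ a * (\<Prod>p\<in>S. p ^ e p)"
    using W(1) unfolding gG_def by blast
  have Y0: "Y \<noteq> 0" using assms(6) by simp
  have W0: "W \<noteq> 0" using Y0 W(2) by simp
  have ni: "1 + \<i> \<notin> S"
  proof
    assume "1 + \<i> \<in> S"
    then have "1 + \<i> \<in> gOI" using S(2) by blast
    then show False using OI_not_dvd1i gdvd_refl by blast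
  qed
  define e' where "e' q = (if q = 1 + \<i> then a else e q)" for q
  define T0 where "T0 = insert (1 + \<i>) S"
  have fT0: "finite T0" unfolding T0_def using S(1) by simp
  have T0p: "\<forall>p\<in>T0. gauss_prime p" unfolding T0_def using S(2) prime_1i by blast
  have T0g: "\<forall>p\<in>T0. p \<in> gauss_int" using T0p prime_gi by blast
  have T0d: "\<forall>p\<in>T0. \<forall>q\<in>T0. p gdvd q \<longrightarrow> p = q" unfolding T0_def using distinct_T[OF S(2)] by blast
  have "(\<Prod>q\<in>T0. q ^ e' q) = (1 + \<i>) ^ e' (1 + \<i>) * (\<Prod>q\<in>S. q ^ e' q)"
    unfolding T0_def using S(1) ni by simp
  also have "(\<Prod>q\<in>S. q ^ e' q) = (\<Prod>q\<in>S. q ^ e q)"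
    using ni unfolding e'_def by (intro prod.cong) auto
  finally have WT: "W = (\<Prod>q\<in>T0. q ^ e' q)" unfolding Wd e'_def by simp
  have WG: "W \<in> gauss_int" unfolding WT using T0g by (intro gi_prod gi_power) blast

  obtain a1 b1 :: int where X1: "X = Complex (of_int a1) (of_int b1)" "a1 mod 4 = 1" "even b1"
    using assms(7) by (rule gOI_form)
  obtain a2 b2 :: int where Z1: "Z = Complex (of_int a2) (of_int b2)" "a2 mod 4 = 1" "even b2"
    using assms(8) by (rule gOI_form)
  have "even (a2 + a1)" "even (b2 + b1)" "even (a2 - a1)" "even (b2 - b1)"
    using X1(2,3) Z1(2,3) by presburger+
  then obtain k1 k2 k3 k4 where k: "a2 + a1 = 2 * k1" "b2 + b1 = 2 * k2" "a2 - a1 = 2 * k3" "b2 - b1 = 2 * k4"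
    by (metis evenE)
  define x where "x = Complex (of_int k1) (of_int k2)"
  define y where "y = Complex (of_int k3) (of_int k4)"
  have xG: "x \<in> gauss_int" unfolding x_def gauss_int_iff by blast
  have yG: "y \<in> gauss_int" unfolding y_def gauss_int_iff by blast
  have rk: "real_of_int a2 + real_of_int a1 = 2 * real_of_int k1"
    "real_of_int b2 + real_of_int b1 = 2 * real_of_int k2"
    "real_of_int a2 - real_of_int a1 = 2 * real_of_int k3"
    "real_of_int b2 - real_of_int b1 = 2 * real_of_int k4"
    using k by (simp_all only: of_int_add[symmetric] of_int_diff[symmetric] of_int_mult[symmetric] of_int_eq_iff)
  have Zxy: "Z = x + y" unfolding Z1 x_def y_def using rk by (simp add: complex_eq_iff)
  have Xxy: "X = x - y" unfolding X1 x_def y_def using rk by (simp add: complex_eq_iff)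
  have i2: "(1 + \<i>)\<^sup>2 = 2 * \<i>" by (simp add: complex_eq_iff power2_eq_square)
  have "4 * (x * y) = Z\<^sup>2 - X\<^sup>2" unfolding Zxy Xxy by (simp add: algebra_simps power2_eq_square)
  also have "\<dots> = Y\<^sup>2" using assms(4) by (simp add: algebra_simps)
  also have "\<dots> = 4 * (- W\<^sup>2)" unfolding W(2) i2 by (simp add: power2_eq_square algebra_simps)
  finally have xy: "x * y = - W\<^sup>2" by simp

  have nc: "\<not> (p gdvd x \<and> p gdvd y)" if pp: "gauss_prime p" for p
  proof
    assume h: "p gdvd x \<and> p gdvd y"
    then have pZ: "p gdvd Z" and pX: "p gdvd X" unfolding Zxy Xxy using gdvd_add gdvd_diff by blast+
    have "p gdvd Z * Z - X * X" using gdvd_multR[OF pZ ZG] gdvd_multR[OF pX XG] by (rule gdvd_diff)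
    moreover have "Z * Z - X * X = Y * Y" using assms(4) by (simp add: power2_eq_square algebra_simps)
    ultimately have "p gdvd Y * Y" by simp
    then have "p gdvd Y" using prime_dvd_mult[OF pp YG YG] by blast
    then have "p \<in> gunits" using assms(5) pX prime_gi[OF pp] unfolding gcd_unit_def by blast
    then show False using pp unfolding gauss_prime_def by blast
  qed

  define T1 where "T1 = {q\<in>T0. q gdvd x}"
  define T2 where "T2 = {q\<in>T0. \<not> q gdvd x}"
  define P where "P = (\<Prod>q\<in>T1. q ^ e' q)"
  define Q where "Q = (\<Prod>q\<in>T2. q ^ e' q)"
  have fT1: "finite T1" "finite T2" unfolding T1_def T2_def using fT0 by simp_all
  have T12: "T0 = T1 \<union> T2" "T1 \<inter> T2 = {}" unfolding T1_def T2_def by blast+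
  have WPQ: "W = P * Q" unfolding WT P_def Q_def T12(1) by (rule prod.union_disjoint[OF fT1 T12(2)])
  have PG: "P \<in> gauss_int" unfolding P_def using T0g T12 by (intro gi_prod gi_power) blast
  have QG: "Q \<in> gauss_int" unfolding Q_def using T0g T12 by (intro gi_prod gi_power) blast
  have PgG: "P \<in> gG" unfolding P_def using S by (rule prod_in_gG) (auto simp: T1_def T0_def)
  have QgG: "Q \<in> gG" unfolding Q_def using S by (rule prod_in_gG) (auto simp: T2_def T0_def)

  have qW: "(q ^ e' q) ^ 2 gdvd W\<^sup>2" if q: "q \<in> T0" for q
  proof -
    have "W = q ^ e' q * (\<Prod>r\<in>T0 - {q}. r ^ e' r)" unfolding WT by (rule prod.remove[OF fT0 q])
    moreover have "(\<Prod>r\<in>T0 - {q}. r ^ e' r) \<in> gauss_int" using T0g by (intro gi_prod gi_power) blast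
    ultimately have "q ^ e' q gdvd W" by (intro gdvdI) 
    then show ?thesis by (rule gdvd_power)
  qed
  define k where "k q = e' q * 2" for q
  have Pk: "P\<^sup>2 = (\<Prod>q\<in>T1. q ^ k q)" unfolding P_def k_def prod_power_distrib power_mult ..
  have Qk: "Q\<^sup>2 = (\<Prod>q\<in>T2. q ^ k q)" unfolding Q_def k_def prod_power_distrib power_mult ..
  have mW: "- W\<^sup>2 \<in> gauss_int" using WG by (simp add: gi_minus gi_power)
  have P2x: "P\<^sup>2 gdvd x" unfolding Pk
  proof (rule lemmaB[OF fT1(1)])
    show "\<forall>p\<in>T1. gauss_prime p" "\<forall>p\<in>T1. \<forall>q\<in>T1. p gdvd q \<longrightarrow> p = q"
      using T0p T0d unfolding T1_def by blast+
    show "x \<in> gauss_int" by (rule xG)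
    show "\<forall>p\<in>T1. p ^ k p gdvd x"
    proof
      fix q assume q: "q \<in> T1"
      then have q0: "q \<in> T0" "q gdvd x" unfolding T1_def by blast+
      have qp: "gauss_prime q" using T0p q0 by blast
      have "q ^ k q gdvd W\<^sup>2" using qW[OF q0(1)] unfolding k_def power_mult .
      then have "q ^ k q gdvd x * (- y)" using xy by simp
      moreover have "\<not> q gdvd - y"
      proof
        assume "q gdvd - y" then have "q gdvd - (- y)" by (rule gdvd_minus)
        then show False using nc[OF qp] q0 by simp
      qed
      ultimately show "q ^ k q gdvd x" using lemmaA[OF qp xG gi_minus[OF yG]] by blast
    qed
  qed
  have Q2y: "Q\<^sup>2 gdvd y" unfolding Qk
  proof (rule lemmaB[OF fT1(2)])
    show "\<forall>p\<in>T2. gauss_prime p" "\<forall>p\<in>T2. \<forall>q\<in>T2. p gdvd q \<longrightarrow> p = q"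
      using T0p T0d unfolding T2_def by blast+
    show "y \<in> gauss_int" by (rule yG)
    show "\<forall>p\<in>T2. p ^ k p gdvd y"
    proof
      fix q assume q: "q \<in> T2"
      then have q0: "q \<in> T0" "\<not> q gdvd x" unfolding T2_def by blast+
      have qp: "gauss_prime q" using T0p q0 by blast
      have "q ^ k q gdvd W\<^sup>2" using qW[OF q0(1)] unfolding k_def power_mult .
      then have "q ^ k q gdvd y * (- x)" using xy by (simp add: mult.commute)
      moreover have "\<not> q gdvd - x"
      proof
        assume "q gdvd - x" then have "q gdvd - (- x)" by (rule gdvd_minus)
        then show False using q0 by simp
      qed
      ultimately show "q ^ k q gdvd y" using lemmaA[OF qp yG gi_minus[OF xG]] by blast
    qed
  qed
  obtain r where r: "r \<in> gauss_int" "x = P\<^sup>2 * r" using P2x by (rule gdvdE)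
  obtain s where s: "s \<in> gauss_int" "y = Q\<^sup>2 * s" using Q2y by (rule gdvdE)
  have PQ0: "(P * Q)\<^sup>2 \<noteq> 0" using W0 WPQ by simp
  have "(P * Q)\<^sup>2 * (r * s) = (P * Q)\<^sup>2 * (- 1)"
    using xy unfolding r(2) s(2) WPQ by (simp add: power_mult_distrib ac_simps)
  then have rs: "r * s = - 1" by (rule mult_left_cancel[OF PQ0, THEN iffD1])
  have "r * (- s) = 1" using rs by simp
  then have ru: "r \<in> gunits" using unit_lemma r(1) gi_minus[OF s(1)] by blast
  have r0: "r \<noteq> 0" using rs by auto
  have sr: "s = - 1 / r" using rs r0 by (simp add: field_simps)

  have d1: "(1 + \<i>) gdvd P * Q"
  proof -
    have "(1 + \<i>) gdvd x \<or> (1 + \<i>) gdvd y"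
    proof (rule ccontr)
      assume "\<not> ((1 + \<i>) gdvd x \<or> (1 + \<i>) gdvd y)"
      then have "odd (k1 + k2)" "odd (k3 + k4)" unfolding x_def y_def dvd1i_iff by blast+
      moreover have "a2 = k1 + k3" "b2 = k2 + k4" using k by linarith+
      ultimately have "even (a2 + b2)" by presburger
      then have "(1 + \<i>) gdvd Z" unfolding Z1 dvd1i_iff .
      then show False using OI_not_dvd1i assms(8) by blast
    qed
    then have "(1 + \<i>) gdvd x * y" using gdvd_multR[OF _ yG] gdvd_multL[OF _ xG] by blast
    then have "(1 + \<i>) gdvd - (x * y)" by (rule gdvd_minus)
    then have "(1 + \<i>) gdvd W * W" using xy by (simp add: power2_eq_square)
    then have "(1 + \<i>) gdvd W" using prime_dvd_mult[OF prime_1i WG WG] by blast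
    then show ?thesis using WPQ by simp
  qed

  have cop: "coprime_G P Q"
    unfolding coprime_G_def
  proof
    assume "\<exists>p. gauss_prime p \<and> p gdvd P \<and> p gdvd Q"
    then obtain p where p: "gauss_prime p" "p gdvd P" "p gdvd Q" by blast
    have "P gdvd P\<^sup>2" unfolding power2_eq_square by (rule gdvd_self_mult[OF PG])
    then have "p gdvd x" using p(2) P2x gdvd_trans by blast
    moreover have "Q gdvd Q\<^sup>2" unfolding power2_eq_square by (rule gdvd_self_mult[OF QG])
    then have "p gdvd y" using p(3) Q2y gdvd_trans by blast
    ultimately show False using nc[OF p(1)] by blast
  qed
  have YPQ: "Y = (1 + \<i>)\<^sup>2 * P * Q" using W(2) WPQ by (simp add: mult.assoc)
  have Xe: "X = P\<^sup>2 * r - Q\<^sup>2 * s" unfolding Xxy r(2) s(2) ..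
  have Ze: "Z = P\<^sup>2 * r + Q\<^sup>2 * s" unfolding Zxy r(2) s(2) ..
  consider "r = 1" | "r = -1" | "r = \<i>" | "r = -\<i>" using ru unfolding gunits_def by blast
  then show ?thesis
  proof cases
    case 1
    then have "s = -1" using sr by simp
    then have "X = \<i> ^ (3 + 1) * (P\<^sup>2 - (-1) ^ 3 * Q\<^sup>2) \<and> Z = \<i> ^ (3 + 1) * (P\<^sup>2 + (-1) ^ 3 * Q\<^sup>2)"
      using 1 Xe Ze by simp
    then show ?thesis using PgG QgG cop d1 YPQ by (intro exI[of _ 3] exI[of _ P] exI[of _ Q]) simp
  next
    case 2
    then have "s = 1" using sr by simp
    then have "X = \<i> ^ (1 + 1) * (P\<^sup>2 - (-1) ^ 1 * Q\<^sup>2) \<and> Z = \<i> ^ (1 + 1) * (P\<^sup>2 + (-1) ^ 1 * Q\<^sup>2)"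
      using 2 Xe Ze by (simp add: power2_eq_square algebra_simps)
    then show ?thesis using PgG QgG cop d1 YPQ by (intro exI[of _ 1] exI[of _ P] exI[of _ Q]) simp
  next
    case 3
    then have "\<i> * (\<i> * s) = \<i> * (-1)" using rs by simp
    then have "s = \<i>" by (simp add: complex_i_mult_minus)
    then have "X = \<i> ^ (0 + 1) * (P\<^sup>2 - (-1) ^ 0 * Q\<^sup>2) \<and> Z = \<i> ^ (0 + 1) * (P\<^sup>2 + (-1) ^ 0 * Q\<^sup>2)"
      using 3 Xe Ze by (simp add: algebra_simps)
    then show ?thesis using PgG QgG cop d1 YPQ by (intro exI[of _ 0] exI[of _ P] exI[of _ Q]) simp
  next
    case 4
    then have "\<i> * (\<i> * s) = - \<i> * (-1)" using rs by simp
    then have "- s = \<i>" by (simp add: complex_i_mult_minus)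
    then have "s = -\<i>" by (metis minus_minus)
    then have "X = \<i> ^ (2 + 1) * (P\<^sup>2 - (-1) ^ 2 * Q\<^sup>2) \<and> Z = \<i> ^ (2 + 1) * (P\<^sup>2 + (-1) ^ 2 * Q\<^sup>2)"
      using 4 Xe Ze by (simp add: algebra_simps)
    then show ?thesis using PgG QgG cop d1 YPQ by (intro exI[of _ 2] exI[of _ P] exI[of _ Q]) simp
  qed
qed


end
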